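(* Let $n,x$ be integers with $1<x<n$, so that $G=C_{2n}(x,1,n)$ is a $5$-regular circulant graph. If $\tfrac{n}{2}<x\leq \tfrac{2n}{3}$, then $G$ is word-representable and $R(G)\leq 5$.
   Context: Two distinct letters $x,y$ alternate in a word $w$ if, after deleting all other letters from $w$, the resulting word is of the form $xyxy\cdots$ or $yxyx\cdots$ (of even or odd length). A graph $G=(V,E)$ is word-representable if there is a word $w$ over the alphabet $V$, containing every letter of $V$ at least once, such that for all distinct $x,y\in V$, $xy\in E$ if and only if $x$ and $y$ alternate in $w$. A word is $k$-uniform if every letter occurs in it exactly $k$ times; $G$ is $k$-representable if some $k$-uniform word represents it, and the representation number $R(G)$ of a word-representable graph $G$ is the least such $k$. For an integer $m$ and a set $R$ of positive integers each at most $m/2$, the circulant graph $C_m(R)$ has vertex set $\{0,1,\dots,m-1\}$, with $i$ and $j$ adjacent iff $\min(|i-j|,\,m-|i-j|)\in R$. $C_{2n}(x,1,n)$ denotes the circulant graph on $2n$ vertices with jump set $\{1,x,n\}$; it is $5$-regular exactly when $1<x<n$. *)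

theory Defs
  imports Complex_Main
begin

definition alternate :: "'a list \<Rightarrow> 'a \<Rightarrow> 'a \<Rightarrow> bool" where
  "alternate w x y \<longleftrightarrow>
     (let u = filter (\<lambda>z. z = x \<or> z = y) w in
        u = map (\<lambda>i. if even i then x else y) [0..<length u] \<or>
        u = map (\<lambda>i. if even i then y else x) [0..<length u])"

definition represents :: "'a set \<Rightarrow> ('a \<Rightarrow> 'a \<Rightarrow> bool) \<Rightarrow> 'a list \<Rightarrow> bool" where
  "represents V E w \<longleftrightarrow> set w = V \<and>
     (\<forall>x\<in>V. \<forall>y\<in>V. x \<noteq> y \<longrightarrow> (E x y \<longleftrightarrow> alternate w x y))"

definition word_representable :: "'a set \<Rightarrow> ('a \<Rightarrow> 'a \<Rightarrow> bool) \<Rightarrow> bool" where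
  "word_representable V E \<longleftrightarrow> (\<exists>w. represents V E w)"

definition uniform :: "nat \<Rightarrow> 'a list \<Rightarrow> bool" where
  "uniform k w \<longleftrightarrow> (\<forall>a\<in>set w. count_list w a = k)"

definition k_representable :: "nat \<Rightarrow> 'a set \<Rightarrow> ('a \<Rightarrow> 'a \<Rightarrow> bool) \<Rightarrow> bool" where
  "k_representable k V E \<longleftrightarrow> (\<exists>w. uniform k w \<and> represents V E w)"

definition rep_number :: "'a set \<Rightarrow> ('a \<Rightarrow> 'a \<Rightarrow> bool) \<Rightarrow> nat" where
  "rep_number V E = (LEAST k. k_representable k V E)"

definition circ_vertices :: "nat \<Rightarrow> nat set" where
  "circ_vertices m = {0..<m}"

definition circ_adj :: "nat \<Rightarrow> nat set \<Rightarrow> nat \<Rightarrow> nat \<Rightarrow> bool" where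
  "circ_adj m R i j \<longleftrightarrow>
     (let d = (if i \<le> j then j - i else i - j) in min d (m - d) \<in> R)"

end

theory Submission
  imports Defs
begin


definition pat :: "'a \<Rightarrow> 'a \<Rightarrow> nat \<Rightarrow> 'a list" where
  "pat a b k = map (\<lambda>i. if even i then a else b) [0..<k]"

lemma pat_Suc: "pat a b (Suc k) = pat a b k @ [if even k then a else b]"
  by (simp add: pat_def)

lemma pat_Suc_Cons: "pat a b (Suc k) = a # pat b a k"
  unfolding pat_def by (simp add: upt_conv_Cons map_Suc_upt[symmetric] del: upt_Suc)

lemma length_pat[simp]: "length (pat a b k) = k"
  by (simp add: pat_def)

lemma count_pat:
  assumes "a \<noteq> b"
  shows "count_list (pat a b k) a = (k + 1) div 2 \<and> count_list (pat a b k) b = k div 2"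
  using assms by (induction k) (auto simp: pat_Suc pat_def)

lemma alternate_pat:
  "alternate w a b \<longleftrightarrow>
     (let u = filter (\<lambda>z. z = a \<or> z = b) w in u = pat a b (length u) \<or> u = pat b a (length u))"
  by (simp add: alternate_def pat_def)

definition cnt where "cnt w i v = count_list (take i w) v"

lemma count_filter_ab:
  "v = a \<or> v = b \<Longrightarrow> count_list (filter (\<lambda>z. z = a \<or> z = b) w) v = count_list w v"
  by (induction w) auto

lemma snoc_pat:
  "(u @ [c] = pat a b (Suc (length u))) \<longleftrightarrow> (u = pat a b (length u) \<and> c = (if even (length u) then a else b))"
  by (simp add: pat_Suc)

lemma D_crit:
  assumes ab: "a \<noteq> b"
  shows "(filter (\<lambda>z. z = a \<or> z = b) w = pat a b (length (filter (\<lambda>z. z = a \<or> z = b) w)))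
    \<longleftrightarrow> ((\<forall>i<length w. w!i = a \<longrightarrow> cnt w i a = cnt w i b) \<and>
         (\<forall>i<length w. w!i = b \<longrightarrow> cnt w i a = cnt w i b + 1))"
proof (induction w rule: rev_induct)
  case Nil
  then show ?case by (simp add: pat_def)
next
  case (snoc c w)
  define u where "u = filter (\<lambda>z. z = a \<or> z = b) w"
  have cw: "\<And>i. i < length w \<Longrightarrow> cnt (w @ [c]) i = cnt w i"
    by (intro ext) (simp add: cnt_def)
  have cl: "cnt (w @ [c]) (length w) = count_list w"
    by (rule ext) (simp add: cnt_def)
  have conds: "((\<forall>i<length (w@[c]). (w@[c])!i = a \<longrightarrow> cnt (w@[c]) i a = cnt (w@[c]) i b) \<and>
         (\<forall>i<length (w@[c]). (w@[c])!i = b \<longrightarrow> cnt (w@[c]) i a = cnt (w@[c]) i b + 1))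
     \<longleftrightarrow> ((\<forall>i<length w. w!i = a \<longrightarrow> cnt w i a = cnt w i b) \<and>
         (\<forall>i<length w. w!i = b \<longrightarrow> cnt w i a = cnt w i b + 1)) \<and>
         (c = a \<longrightarrow> count_list w a = count_list w b) \<and> (c = b \<longrightarrow> count_list w a = count_list w b + 1)"
    (is "?L \<longleftrightarrow> ?R")
  proof
    assume L: ?L
    show ?R
    proof (intro conjI allI impI)
      fix i assume "i < length w" "w ! i = a"
      then show "cnt w i a = cnt w i b" using L[THEN conjunct1, rule_format, of i] cw[of i] by (simp add: nth_append)
    next
      fix i assume "i < length w" "w ! i = b"
      then show "cnt w i a = cnt w i b + 1" using L[THEN conjunct2, rule_format, of i] cw[of i] by (simp add: nth_append)
    next
      assume "c = a" then show "count_list w a = count_list w b"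
        using L cl by (metis length_append_singleton lessI nth_append_length)
    next
      assume "c = b" then show "count_list w a = count_list w b + 1"
        using L cl by (metis length_append_singleton lessI nth_append_length)
    qed
  next
    assume R: ?R
    show ?L
    proof (intro conjI allI impI)
      fix i assume i: "i < length (w @ [c])" "(w @ [c]) ! i = a"
      show "cnt (w @ [c]) i a = cnt (w @ [c]) i b"
      proof (cases "i < length w")
        case True then show ?thesis using R[THEN conjunct1, THEN conjunct1, rule_format, of i] i cw[of i] by (simp add: nth_append)
      next
        case False then have "i = length w" using i by simp
        then show ?thesis using R i cl by simp
      qed
    next
      fix i assume i: "i < length (w @ [c])" "(w @ [c]) ! i = b"
      show "cnt (w @ [c]) i a = cnt (w @ [c]) i b + 1"
      proof (cases "i < length w")
        case True then show ?thesis using R[THEN conjunct1, THEN conjunct2, rule_format, of i] i cw[of i] by (simp add: nth_append)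
      next
        case False then have "i = length w" using i by simp
        then show ?thesis using R i cl ab by auto
      qed
    qed
  qed
  have ca: "count_list w a = count_list u a" and cb: "count_list w b = count_list u b"
    by (simp_all add: u_def count_filter_ab)
  show ?case
  proof (cases "c = a \<or> c = b")
    case False
    then show ?thesis using snoc.IH conds by (simp add: u_def)
  next
    case True
    have f: "filter (\<lambda>z. z = a \<or> z = b) (w @ [c]) = u @ [c]" using True by (simp add: u_def)
    have "(u @ [c] = pat a b (length (u @ [c]))) \<longleftrightarrow> (u = pat a b (length u) \<and>
        (c = a \<longrightarrow> count_list w a = count_list w b) \<and> (c = b \<longrightarrow> count_list w a = count_list w b + 1))"
    proof -
      have "(u @ [c] = pat a b (length (u @ [c]))) \<longleftrightarrow> (u = pat a b (length u) \<and> c = (if even (length u) then a else b))"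
        using snoc_pat[of u c a b] by simp
      also have "\<dots> \<longleftrightarrow> (u = pat a b (length u) \<and>
        (c = a \<longrightarrow> count_list w a = count_list w b) \<and> (c = b \<longrightarrow> count_list w a = count_list w b + 1))"
      proof (cases "u = pat a b (length u)")
        case True
        then have "count_list u a = (length u + 1) div 2" "count_list u b = length u div 2"
          using count_pat[OF ab, of "length u"] by metis+
        then show ?thesis using True \<open>c = a \<or> c = b\<close> ab ca cb by auto
      qed simp
      finally show ?thesis .
    qed
    then show ?thesis using f snoc.IH conds by (simp add: u_def)
  qed
qed

lemma rot_pat:
  assumes "odd (length u)"
  shows "(u @ [c] = pat a b (Suc (length u)) \<or> u @ [c] = pat b a (Suc (length u))) \<longleftrightarrow>
         (c # u = pat a b (Suc (length u)) \<or> c # u = pat b a (Suc (length u)))"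
proof -
  have A: "\<And>s t. (u @ [c] = pat s t (Suc (length u))) \<longleftrightarrow> (u = pat s t (length u) \<and> c = t)"
    using assms by (simp add: pat_Suc)
  have B: "\<And>s t. (c # u = pat s t (Suc (length u))) \<longleftrightarrow> (c = s \<and> u = pat t s (length u))"
    by (simp add: pat_Suc_Cons)
  show ?thesis unfolding A B by blast
qed

lemma length_filter_ab:
  "a \<noteq> b \<Longrightarrow> length (filter (\<lambda>z. z = a \<or> z = b) w) = count_list w a + count_list w b"
  by (induction w) auto

lemma alt_rot1:
  assumes ab: "a \<noteq> b" and c: "count_list w a = count_list w b"
  shows "alternate (rotate1 w) a b \<longleftrightarrow> alternate w a b"
proof (cases w)
  case Nil then show ?thesis by simp
next
  case (Cons e w')
  show ?thesis
  proof (cases "e = a \<or> e = b")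
    case False
    then show ?thesis using Cons by (simp add: alternate_pat Let_def)
  next
    case True
    define u where "u = filter (\<lambda>z. z = a \<or> z = b) w'"
    have "length (filter (\<lambda>z. z = a \<or> z = b) w) = count_list w a + count_list w b"
      using length_filter_ab[OF ab] .
    then have ev: "even (Suc (length u))" using Cons True c by (auto simp: u_def)
    have f1: "filter (\<lambda>z. z = a \<or> z = b) (rotate1 w) = u @ [e]" using Cons True by (simp add: u_def)
    have f2: "filter (\<lambda>z. z = a \<or> z = b) w = e # u" using Cons True by (simp add: u_def)
    show ?thesis unfolding alternate_pat Let_def f1 f2 using rot_pat[of u e a b] ev by simp
  qed
qed

lemma count_rotate1: "count_list (rotate1 w) v = count_list w v"
  by (cases w) auto

lemma count_rotate: "count_list (rotate k w) v = count_list w v"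
  by (induction k) (auto simp: rotate_Suc count_rotate1 simp del: rotate1.simps)

lemma alt_rot:
  assumes ab: "a \<noteq> b" and c: "count_list w a = count_list w b"
  shows "alternate (rotate k w) a b \<longleftrightarrow> alternate w a b"
proof (induction k)
  case 0 then show ?case by simp
next
  case (Suc k)
  have "count_list (rotate k w) a = count_list (rotate k w) b" using c by (simp add: count_rotate)
  then show ?case using alt_rot1[OF ab] Suc by (simp add: rotate_Suc)
qed

lemma alt_map:
  assumes inj: "inj_on g (set w)" and a: "a \<in> set w" and b: "b \<in> set w"
  shows "alternate (map g w) (g a) (g b) \<longleftrightarrow> alternate w a b"
proof -
  define u where "u = filter (\<lambda>z. z = a \<or> z = b) w"
  have f: "filter (\<lambda>z. z = g a \<or> z = g b) (map g w) = map g u"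
    unfolding u_def filter_map
  proof (rule arg_cong[where f="map g"], rule filter_cong)
    fix z assume "z \<in> set w"
    then show "((\<lambda>z. z = g a \<or> z = g b) \<circ> g) z = (z = a \<or> z = b)"
      using inj a b by (auto dest: inj_onD)
  qed simp
  have pm: "\<And>s t k. pat (g s) (g t) k = map g (pat s t k)" by (simp add: pat_def)
  have su: "set u \<subseteq> set w" by (auto simp: u_def)
  have sp: "\<And>k. set (pat a b k) \<subseteq> set w" "\<And>k. set (pat b a k) \<subseteq> set w"
    using a b by (auto simp: pat_def)
  have i1: "\<And>k. inj_on g (set u \<union> set (pat a b k))" "\<And>k. inj_on g (set u \<union> set (pat b a k))"
    using inj su sp by (meson Un_least inj_on_subset)+
  show ?thesis unfolding alternate_pat Let_def f u_def[symmetric] pm length_map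
    using inj_on_map_eq_map[OF i1(1)] inj_on_map_eq_map[OF i1(2)] by simp
qed



definition bb :: "nat \<Rightarrow> nat \<Rightarrow> nat \<Rightarrow> nat" where
  "bb n x j = (if j = 0 then 0 else if j = 1 then 2*n-1 else if j = 2 then 2*n-x else if j = 3 then n else x)"

definition ww :: "nat \<Rightarrow> nat \<Rightarrow> nat list" where
  "ww n x = map (\<lambda>i. (i div 5 + bb n x (i mod 5)) mod (2*n)) [0..<10*n]"

definition ps :: "nat \<Rightarrow> nat \<Rightarrow> nat \<Rightarrow> nat \<Rightarrow> nat" where
  "ps n x j v = 5 * ((v + 2*n - bb n x j) mod (2*n)) + j"

lemma modsub: "(d::nat) < N \<Longrightarrow> b < N \<Longrightarrow> (d + N - b) mod N = (if b \<le> d then d - b else d + N - b)"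
proof -
  assume "d < N" "b < N"
  show ?thesis
  proof (cases "b \<le> d")
    case True
    then have "d + N - b = (d - b) + N" by arith
    then have "(d + N - b) mod N = (d - b) mod N" by (metis mod_add_self2)
    then show ?thesis using True \<open>d < N\<close> by simp
  next
    case False then show ?thesis using \<open>d < N\<close> by simp
  qed
qed

context
  fixes n x :: nat
  assumes x1: "1 < x" and xn: "x < n" and h1: "n < 2*x" and h2: "3*x \<le> 2*n"
begin

lemma bb_lt: "bb n x j < 2*n"
  using x1 xn by (simp add: bb_def)

lemma length_ww[simp]: "length (ww n x) = 10*n"
  by (simp add: ww_def)

lemma nth_ww: "i < 10*n \<Longrightarrow> ww n x ! i = (i div 5 + bb n x (i mod 5)) mod (2*n)"
  by (simp add: ww_def)

lemma ps_lt: "j < 5 \<Longrightarrow> ps n x j v < 10*n"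
proof -
  assume j: "j < 5"
  have "(v + 2*n - bb n x j) mod (2*n) < 2*n" using xn by simp
  then have "(v + 2*n - bb n x j) mod (2*n) \<le> 2*n - 1" by linarith
  then show ?thesis using j xn unfolding ps_def by linarith
qed

lemma ps_div: "j < 5 \<Longrightarrow> ps n x j v div 5 = (v + 2*n - bb n x j) mod (2*n)"
  by (simp add: ps_def)

lemma ps_mod: "j < 5 \<Longrightarrow> ps n x j v mod 5 = j"
  by (simp add: ps_def)

lemma ww_eq: 
  assumes i: "i < 10*n" and v: "v < 2*n"
  shows "ww n x ! i = v \<longleftrightarrow> (\<exists>j<5. i = ps n x j v)"
proof
  assume h: "ww n x ! i = v"
  define t where "t = i div 5"
  define j where "j = i mod 5"
  have t: "t < 2*n" using i by (simp add: t_def)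
  have b: "bb n x j < 2*n" by (rule bb_lt)
  have tv: "(t + bb n x j) mod (2*n) = v" using h i by (simp add: nth_ww t_def j_def)
  have "(v + 2*n - bb n x j) mod (2*n) = t"
  proof (cases "t + bb n x j < 2*n")
    case True
    then have "v = t + bb n x j" using tv by simp
    then have "v + 2*n - bb n x j = t + 2*n" by simp
    then show ?thesis using t by simp
  next
    case False
    have l: "t + bb n x j - 2*n < 2*n" using t b by linarith
    have "(t + bb n x j) mod (2*n) = (t + bb n x j - 2*n) mod (2*n)" using False by (simp add: le_mod_geq)
    then have "v = t + bb n x j - 2*n" using tv l by simp
    then have "v + 2*n - bb n x j = t" using False by simp
    then show ?thesis using t by simp
  qed
  then have "i = ps n x j v" unfolding ps_def j_def using t_def by simp
  moreover have "j < 5" using j_def by simp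
  ultimately show "\<exists>j<5. i = ps n x j v" by blast
next
  assume "\<exists>j<5. i = ps n x j v"
  then obtain j where j: "j < 5" "i = ps n x j v" by blast
  have b: "bb n x j < 2*n" by (rule bb_lt)
  have "ww n x ! i = ((v + 2*n - bb n x j) mod (2*n) + bb n x j) mod (2*n)"
    using i j by (simp add: nth_ww ps_div ps_mod)
  also have "\<dots> = (v + 2*n - bb n x j + bb n x j) mod (2*n)" by (simp add: mod_add_left_eq)
  also have "\<dots> = v" using b v by simp
  finally show "ww n x ! i = v" .
qed

lemma ps_inj: "inj_on (\<lambda>j. ps n x j v) {j. j < 5 \<and> P j}"
  by (rule inj_onI) (metis (no_types, lifting) mem_Collect_eq ps_mod)

lemma cnt_ww:
  assumes v: "v < 2*n"
  shows "cnt (ww n x) p v = card {j. j < 5 \<and> ps n x j v < p}"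
proof -
  have "cnt (ww n x) p v = card {i. i < min p (10*n) \<and> v = ww n x ! i}"
    unfolding cnt_def count_list_eq_length_filter length_filter_conv_card
    by (intro arg_cong[where f=card] Collect_cong) auto
  also have "{i. i < min p (10*n) \<and> v = ww n x ! i} = (\<lambda>j. ps n x j v) ` {j. j < 5 \<and> ps n x j v < p}"
  proof (rule set_eqI, rule iffI)
    fix i assume "i \<in> {i. i < min p (10*n) \<and> v = ww n x ! i}"
    then show "i \<in> (\<lambda>j. ps n x j v) ` {j. j < 5 \<and> ps n x j v < p}"
      using ww_eq[of i v] v by auto
  next
    fix i assume "i \<in> (\<lambda>j. ps n x j v) ` {j. j < 5 \<and> ps n x j v < p}"
    then obtain j where "j < 5" "ps n x j v < p" "i = ps n x j v" by auto
    then show "i \<in> {i. i < min p (10*n) \<and> v = ww n x ! i}"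
      using ww_eq[of i v] v ps_lt[of j v] by auto
  qed
  also have "card \<dots> = card {j. j < 5 \<and> ps n x j v < p}"
    by (rule card_image, rule ps_inj)
  finally show ?thesis .
qed

lemma count_ww: "v < 2*n \<Longrightarrow> count_list (ww n x) v = 5"
proof -
  assume v: "v < 2*n"
  have "count_list (ww n x) v = cnt (ww n x) (10*n) v" by (simp add: cnt_def)
  also have "\<dots> = card {j. j < 5 \<and> ps n x j v < 10*n}" using cnt_ww[OF v] .
  also have "{j. j < 5 \<and> ps n x j v < 10*n} = {..<5}" using ps_lt by auto
  finally show ?thesis by simp
qed

lemma set_ww: "set (ww n x) = {0..<2*n}"
proof
  show "set (ww n x) \<subseteq> {0..<2*n}" using xn by (auto simp: ww_def)
  show "{0..<2*n} \<subseteq> set (ww n x)"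
  proof
    fix v assume "v \<in> {0..<2*n}"
    then have v: "v < 2*n" by simp
    have "\<exists>j<5. ps n x 0 v = ps n x j v" by (rule exI[of _ 0]) simp
    moreover have pl: "ps n x 0 v < 10*n" by (rule ps_lt) simp
    ultimately have "ww n x ! ps n x 0 v = v" using ww_eq[of "ps n x 0 v" v] v by blast
    then show "v \<in> set (ww n x)" using pl by (metis length_ww nth_mem)
  qed
qed

end


lemma all5: "(\<forall>j::nat<5. P j) \<longleftrightarrow> P 0 \<and> P 1 \<and> P 2 \<and> P 3 \<and> P 4"
proof -
  have "{..<5::nat} = {0,1,2,3,4}" by auto
  then show ?thesis by (metis (no_types, lifting) insert_iff lessThan_iff empty_iff)
qed
lemma card5: "card {j::nat. j < 5 \<and> P j} =
  (if P 0 then 1 else 0) + (if P 1 then 1 else 0) + (if P 2 then 1 else 0) + (if P 3 then 1 else 0) + (if P 4 then 1 else 0)"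
proof -
  have e: "{..<5::nat} = {0,1,2,3,4}" by auto
  have "{j::nat. j < 5 \<and> P j} = {j \<in> {..<5}. P j}" by auto
  then have "card {j::nat. j < 5 \<and> P j} = (\<Sum>j\<in>{..<5}. if P j then 1 else 0)"
    using sum.inter_filter[of "{..<5::nat}" "\<lambda>_. 1::nat" P] card_eq_sum[of "{j \<in> {..<5::nat}. P j}"] by simp
  also have "\<dots> = (if P 0 then 1 else 0) + (if P 1 then 1 else 0) + (if P 2 then 1 else 0) + (if P 3 then 1 else 0) + (if P 4 then 1 else 0)"
    unfolding e by simp
  finally show ?thesis .
qed

context
  fixes n x :: nat
  assumes x1: "1 < x" and xn: "x < n" and h1: "n < 2*x" and h2: "3*x \<le> 2*n"
begin

lemmas bb_lt' = bb_lt[OF x1 xn h1 h2]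
lemmas nth_ww' = nth_ww[OF x1 xn h1 h2]
lemmas ps_lt' = ps_lt[OF x1 xn h1 h2]
lemmas ww_eq' = ww_eq[OF x1 xn h1 h2]
lemmas cnt_ww' = cnt_ww[OF x1 xn h1 h2]
lemmas count_ww' = count_ww[OF x1 xn h1 h2]
lemmas set_ww' = set_ww[OF x1 xn h1 h2]
lemmas length_ww' [simp] = length_ww[OF x1 xn h1 h2]

lemma ps_val: "j < 5 \<Longrightarrow> d < 2*n \<Longrightarrow> ps n x j d = 5*(if bb n x j \<le> d then d - bb n x j else d + 2*n - bb n x j) + j"
  unfolding ps_def using modsub[of d "2*n" "bb n x j"] bb_lt by simp

lemma ps0: "ps n x 0 0 = 0" "ps n x 1 0 = 6" "ps n x 2 0 = 5*x+2" "ps n x 3 0 = 5*n+3" "ps n x 4 0 = 10*n-5*x+4"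
  using x1 xn ps_val[of _ 0] by (simp_all add: bb_def)


lemma adj0_v0: "ps n x 0 (1) = 5"
  using x1 xn h1 h2 ps_val[of 0 "1"] by (simp add: bb_def; arith)
lemma adj0_v1: "ps n x 1 (1) = 11"
  using x1 xn h1 h2 ps_val[of 1 "1"] by (simp add: bb_def; arith)
lemma adj0_v2: "ps n x 2 (1) = 5*x+7"
  using x1 xn h1 h2 ps_val[of 2 "1"] by (simp add: bb_def; arith)
lemma adj0_v3: "ps n x 3 (1) = 5*n+8"
  using x1 xn h1 h2 ps_val[of 3 "1"] by (simp add: bb_def; arith)
lemma adj0_v4: "ps n x 4 (1) = 10*n-5*x+9"
  using x1 xn h1 h2 ps_val[of 4 "1"] by (simp add: bb_def; arith)
lemmas adj0_vals = adj0_v0 adj0_v1 adj0_v2 adj0_v3 adj0_v4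

lemma adj0_facts: "(0::nat) < 6" "(0::nat) < 5*x+2" "(0::nat) < 5*n+3" "(0::nat) < 10*n-5*x+4" "(0::nat) < 5" "(0::nat) < 11" "(0::nat) < 5*x+7" "(0::nat) < 5*n+8" "(0::nat) < 10*n-5*x+9" "\<not> (6::nat) < 0" "(6::nat) < 5*x+2" "(6::nat) < 5*n+3" "(6::nat) < 10*n-5*x+4" "\<not> (6::nat) < 5" "(6::nat) < 11" "(6::nat) < 5*x+7" "(6::nat) < 5*n+8" "(6::nat) < 10*n-5*x+9" "\<not> (5*x+2::nat) < 0" "\<not> (5*x+2::nat) < 6" "(5*x+2::nat) < 5*n+3" "(5*x+2::nat) < 10*n-5*x+4" "\<not> (5*x+2::nat) < 5" "\<not> (5*x+2::nat) < 11" "(5*x+2::nat) < 5*x+7" "(5*x+2::nat) < 5*n+8" "(5*x+2::nat) < 10*n-5*x+9" "\<not> (5*n+3::nat) < 0" "\<not> (5*n+3::nat) < 6" "\<not> (5*n+3::nat) < 5*x+2" "(5*n+3::nat) < 10*n-5*x+4" "\<not> (5*n+3::nat) < 5" "\<not> (5*n+3::nat) < 11" "\<not> (5*n+3::nat) < 5*x+7" "(5*n+3::nat) < 5*n+8" "(5*n+3::nat) < 10*n-5*x+9" "\<not> (10*n-5*x+4::nat) < 0" "\<not> (10*n-5*x+4::nat) < 6" "\<not> (10*n-5*x+4::nat) < 5*x+2" "\<not> (10*n-5*x+4::nat) < 5*n+3" "\<not> (10*n-5*x+4::nat) < 5" "\<not> (10*n-5*x+4::nat) < 11" "\<not> (10*n-5*x+4::nat)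 < 5*x+7" "\<not> (10*n-5*x+4::nat) < 5*n+8" "(10*n-5*x+4::nat) < 10*n-5*x+9" "\<not> (5::nat) < 0" "(5::nat) < 6" "(5::nat) < 5*x+2" "(5::nat) < 5*n+3" "(5::nat) < 10*n-5*x+4" "(5::nat) < 11" "(5::nat) < 5*x+7" "(5::nat) < 5*n+8" "(5::nat) < 10*n-5*x+9" "\<not> (11::nat) < 0" "\<not> (11::nat) < 6" "(11::nat) < 5*x+2" "(11::nat) < 5*n+3" "(11::nat) < 10*n-5*x+4" "\<not> (11::nat) < 5" "(11::nat) < 5*x+7" "(11::nat) < 5*n+8" "(11::nat) < 10*n-5*x+9" "\<not> (5*x+7::nat) < 0" "\<not> (5*x+7::nat) < 6" "\<not> (5*x+7::nat) < 5*x+2" "(5*x+7::nat) < 5*n+3" "(5*x+7::nat) < 10*n-5*x+4" "\<not> (5*x+7::nat) < 5" "\<not> (5*x+7::nat) < 11" "(5*x+7::nat) < 5*n+8" "(5*x+7::nat) < 10*n-5*x+9" "\<not> (5*n+8::nat) < 0" "\<not> (5*n+8::nat) < 6" "\<not> (5*n+8::nat) < 5*x+2" "\<not> (5*n+8::nat) < 5*n+3" "(5*n+8::nat) < 10*n-5*x+4" "\<not> (5*n+8::nat) < 5" "\<not> (5*n+8::nat) < 11" "\<not> (5*n+8::nat) < 5*x+7" "(5*n+8::nat) < 10*n-5*x+9" "\<not> (10*n-5*x+9::nat) < 0" "\<not> (10*n-5*x+9::nat) < 6" "\<not> (10*n-5*x+9::nat) < 5*x+2" "\<not> (10*n-5*x+9::nat)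 < 5*n+3" "\<not> (10*n-5*x+9::nat) < 10*n-5*x+4" "\<not> (10*n-5*x+9::nat) < 5" "\<not> (10*n-5*x+9::nat) < 11" "\<not> (10*n-5*x+9::nat) < 5*x+7" "\<not> (10*n-5*x+9::nat) < 5*n+8"
  using x1 xn h1 h2 by arith+

lemma adj0: "(\<forall>j<5. card {k. k < 5 \<and> ps n x k (0) < ps n x j 0} = card {k. k < 5 \<and> ps n x k (1) < ps n x j 0}) \<and> (\<forall>j<5. card {k. k < 5 \<and> ps n x k (0) < ps n x j (1)} = card {k. k < 5 \<and> ps n x k (1) < ps n x j (1)} + 1)"
  unfolding all5 card5 ps0 adj0_vals by (simp only: adj0_facts if_True if_False) simp

lemma adj1_v0: "ps n x 0 (x) = 5*x"
  using x1 xn h1 h2 ps_val[of 0 "x"] by (simp add: bb_def; arith)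
lemma adj1_v1: "ps n x 1 (x) = 5*x+6"
  using x1 xn h1 h2 ps_val[of 1 "x"] by (simp add: bb_def; arith)
lemma adj1_v2: "ps n x 2 (x) = 10*x+2"
  using x1 xn h1 h2 ps_val[of 2 "x"] by (simp add: bb_def; arith)
lemma adj1_v3: "ps n x 3 (x) = 5*x+5*n+3"
  using x1 xn h1 h2 ps_val[of 3 "x"] by (simp add: bb_def; arith)
lemma adj1_v4: "ps n x 4 (x) = 4"
  using x1 xn h1 h2 ps_val[of 4 "x"] by (simp add: bb_def; arith)
lemmas adj1_vals = adj1_v0 adj1_v1 adj1_v2 adj1_v3 adj1_v4

lemma adj1_facts: "(0::nat) < 6" "(0::nat) < 5*x+2" "(0::nat) < 5*n+3" "(0::nat) < 10*n-5*x+4" "(0::nat) < 5*x" "(0::nat) < 5*x+6" "(0::nat) < 10*x+2" "(0::nat) < 5*x+5*n+3" "(0::nat) < 4" "\<not> (6::nat) < 0" "(6::nat) < 5*x+2" "(6::nat) < 5*n+3" "(6::nat) < 10*n-5*x+4" "(6::nat) < 5*x" "(6::nat) < 5*x+6" "(6::nat) < 10*x+2" "(6::nat) < 5*x+5*n+3" "\<not> (6::nat) < 4" "\<not> (5*x+2::nat) < 0" "\<not> (5*x+2::nat) < 6" "(5*x+2::nat) < 5*n+3" "(5*x+2::nat) < 10*n-5*x+4" "\<not> (5*x+2::nat) < 5*x" "(5*x+2::nat) < 5*x+6" "(5*x+2::nat) < 10*x+2" "(5*x+2::nat) < 5*x+5*n+3" "\<not> (5*x+2::nat) < 4" "\<not>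 (5*n+3::nat) < 0" "\<not> (5*n+3::nat) < 6" "\<not> (5*n+3::nat) < 5*x+2" "(5*n+3::nat) < 10*n-5*x+4" "\<not> (5*n+3::nat) < 5*x" "\<not> (5*n+3::nat) < 5*x+6" "(5*n+3::nat) < 10*x+2" "(5*n+3::nat) < 5*x+5*n+3" "\<not> (5*n+3::nat) < 4" "\<not> (10*n-5*x+4::nat) < 0" "\<not> (10*n-5*x+4::nat) < 6" "\<not> (10*n-5*x+4::nat) < 5*x+2" "\<not> (10*n-5*x+4::nat) < 5*n+3" "\<not> (10*n-5*x+4::nat) < 5*x" "\<not> (10*n-5*x+4::nat) < 5*x+6" "\<not> (10*n-5*x+4::nat) < 10*x+2" "(10*n-5*x+4::nat) < 5*x+5*n+3" "\<not> (10*n-5*x+4::nat) < 4" "\<not> (5*x::nat) < 0" "\<not> (5*x::nat) < 6" "(5*x::nat) < 5*x+2" "(5*x::nat) < 5*n+3" "(5*x::nat) < 10*n-5*x+4" "(5*x::nat) < 5*x+6" "(5*x::nat) < 10*x+2" "(5*x::nat) < 5*x+5*n+3" "\<not> (5*x::nat) < 4" "\<not> (5*x+6::nat) < 0" "\<not> (5*x+6::nat) < 6" "\<not> (5*x+6::nat) < 5*x+2" "(5*x+6::nat) < 5*n+3" "(5*x+6::nat) < 10*n-5*x+4" "\<not> (5*x+6::nat) < 5*x" "(5*x+6::nat) < 10*x+2" "(5*x+6::nat) < 5*x+5*n+3" "\<not> (5*x+6::nat) < 4" "\<not> (10*x+2::nat) < 0" "\<not> (10*x+2::nat) < 6" "\<not>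 (10*x+2::nat) < 5*x+2" "\<not> (10*x+2::nat) < 5*n+3" "(10*x+2::nat) < 10*n-5*x+4" "\<not> (10*x+2::nat) < 5*x" "\<not> (10*x+2::nat) < 5*x+6" "(10*x+2::nat) < 5*x+5*n+3" "\<not> (10*x+2::nat) < 4" "\<not> (5*x+5*n+3::nat) < 0" "\<not> (5*x+5*n+3::nat) < 6" "\<not> (5*x+5*n+3::nat) < 5*x+2" "\<not> (5*x+5*n+3::nat) < 5*n+3" "\<not> (5*x+5*n+3::nat) < 10*n-5*x+4" "\<not> (5*x+5*n+3::nat) < 5*x" "\<not> (5*x+5*n+3::nat) < 5*x+6" "\<not> (5*x+5*n+3::nat) < 10*x+2" "\<not> (5*x+5*n+3::nat) < 4" "\<not> (4::nat) < 0" "(4::nat) < 6" "(4::nat) < 5*x+2" "(4::nat) < 5*n+3" "(4::nat) < 10*n-5*x+4" "(4::nat) < 5*x" "(4::nat) < 5*x+6" "(4::nat) < 10*x+2" "(4::nat) < 5*x+5*n+3"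
  using x1 xn h1 h2 by arith+

lemma adj1: "(\<forall>j<5. card {k. k < 5 \<and> ps n x k (0) < ps n x j 0} = card {k. k < 5 \<and> ps n x k (x) < ps n x j 0}) \<and> (\<forall>j<5. card {k. k < 5 \<and> ps n x k (0) < ps n x j (x)} = card {k. k < 5 \<and> ps n x k (x) < ps n x j (x)} + 1)"
  unfolding all5 card5 ps0 adj1_vals by (simp only: adj1_facts if_True if_False) simp

lemma adj2_v0: "ps n x 0 (n) = 5*n"
  using x1 xn h1 h2 ps_val[of 0 "n"] by (simp add: bb_def; arith)
lemma adj2_v1: "ps n x 1 (n) = 5*n+6"
  using x1 xn h1 h2 ps_val[of 1 "n"] by (simp add: bb_def; arith)
lemma adj2_v2: "ps n x 2 (n) = 5*n+5*x+2"
  using x1 xn h1 h2 ps_val[of 2 "n"] by (simp add: bb_def; arith)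
lemma adj2_v3: "ps n x 3 (n) = 3"
  using x1 xn h1 h2 ps_val[of 3 "n"] by (simp add: bb_def; arith)
lemma adj2_v4: "ps n x 4 (n) = 5*n-5*x+4"
  using x1 xn h1 h2 ps_val[of 4 "n"] by (simp add: bb_def; arith)
lemmas adj2_vals = adj2_v0 adj2_v1 adj2_v2 adj2_v3 adj2_v4

lemma adj2_facts: "(0::nat) < 6" "(0::nat) < 5*x+2" "(0::nat) < 5*n+3" "(0::nat) < 10*n-5*x+4" "(0::nat) < 5*n" "(0::nat) < 5*n+6" "(0::nat) < 5*n+5*x+2" "(0::nat) < 3" "(0::nat) < 5*n-5*x+4" "\<not> (6::nat) < 0" "(6::nat) < 5*x+2" "(6::nat) < 5*n+3" "(6::nat) < 10*n-5*x+4" "(6::nat) < 5*n" "(6::nat) < 5*n+6" "(6::nat) < 5*n+5*x+2" "\<not> (6::nat) < 3" "(6::nat) < 5*n-5*x+4" "\<not> (5*x+2::nat) < 0" "\<not> (5*x+2::nat) < 6" "(5*x+2::nat) < 5*n+3" "(5*x+2::nat) < 10*n-5*x+4" "(5*x+2::nat) < 5*n" "(5*x+2::nat) < 5*n+6" "(5*x+2::nat) < 5*n+5*x+2" "\<not> (5*x+2::nat) < 3" "\<not> (5*x+2::nat) < 5*n-5*x+4" "\<not> (5*n+3::nat) < 0" "\<not> (5*n+3::nat) < 6" "\<not> (5*n+3::nat) < 5*x+2" "(5*n+3::nat) < 10*n-5*x+4" "\<not> (5*n+3::nat) < 5*n" "(5*n+3::nat) < 5*n+6" "(5*n+3::nat)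 < 5*n+5*x+2" "\<not> (5*n+3::nat) < 3" "\<not> (5*n+3::nat) < 5*n-5*x+4" "\<not> (10*n-5*x+4::nat) < 0" "\<not> (10*n-5*x+4::nat) < 6" "\<not> (10*n-5*x+4::nat) < 5*x+2" "\<not> (10*n-5*x+4::nat) < 5*n+3" "\<not> (10*n-5*x+4::nat) < 5*n" "\<not> (10*n-5*x+4::nat) < 5*n+6" "(10*n-5*x+4::nat) < 5*n+5*x+2" "\<not> (10*n-5*x+4::nat) < 3" "\<not> (10*n-5*x+4::nat) < 5*n-5*x+4" "\<not> (5*n::nat) < 0" "\<not> (5*n::nat) < 6" "\<not> (5*n::nat) < 5*x+2" "(5*n::nat) < 5*n+3" "(5*n::nat) < 10*n-5*x+4" "(5*n::nat) < 5*n+6" "(5*n::nat) < 5*n+5*x+2" "\<not> (5*n::nat) < 3" "\<not> (5*n::nat) < 5*n-5*x+4" "\<not> (5*n+6::nat) < 0" "\<not> (5*n+6::nat) < 6" "\<not> (5*n+6::nat) < 5*x+2" "\<not> (5*n+6::nat) < 5*n+3" "(5*n+6::nat) < 10*n-5*x+4" "\<not> (5*n+6::nat) < 5*n" "(5*n+6::nat) < 5*n+5*x+2" "\<not> (5*n+6::nat) < 3" "\<not> (5*n+6::nat) < 5*n-5*x+4" "\<not> (5*n+5*x+2::nat) < 0" "\<not> (5*n+5*x+2::nat) < 6" "\<not> (5*n+5*x+2::nat) < 5*x+2" "\<not> (5*n+5*x+2::nat) < 5*n+3" "\<not> (5*n+5*x+2::nat) < 10*n-5*x+4" "\<not> (5*n+5*x+2::nat)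 < 5*n" "\<not> (5*n+5*x+2::nat) < 5*n+6" "\<not> (5*n+5*x+2::nat) < 3" "\<not> (5*n+5*x+2::nat) < 5*n-5*x+4" "\<not> (3::nat) < 0" "(3::nat) < 6" "(3::nat) < 5*x+2" "(3::nat) < 5*n+3" "(3::nat) < 10*n-5*x+4" "(3::nat) < 5*n" "(3::nat) < 5*n+6" "(3::nat) < 5*n+5*x+2" "(3::nat) < 5*n-5*x+4" "\<not> (5*n-5*x+4::nat) < 0" "\<not> (5*n-5*x+4::nat) < 6" "(5*n-5*x+4::nat) < 5*x+2" "(5*n-5*x+4::nat) < 5*n+3" "(5*n-5*x+4::nat) < 10*n-5*x+4" "(5*n-5*x+4::nat) < 5*n" "(5*n-5*x+4::nat) < 5*n+6" "(5*n-5*x+4::nat) < 5*n+5*x+2" "\<not> (5*n-5*x+4::nat) < 3"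
  using x1 xn h1 h2 by arith+

lemma adj2: "(\<forall>j<5. card {k. k < 5 \<and> ps n x k (0) < ps n x j 0} = card {k. k < 5 \<and> ps n x k (n) < ps n x j 0}) \<and> (\<forall>j<5. card {k. k < 5 \<and> ps n x k (0) < ps n x j (n)} = card {k. k < 5 \<and> ps n x k (n) < ps n x j (n)} + 1)"
  unfolding all5 card5 ps0 adj2_vals by (simp only: adj2_facts if_True if_False) simp

lemma adj3_v0: "ps n x 0 (2*n-x) = 10*n-5*x"
  using x1 xn h1 h2 ps_val[of 0 "2*n-x"] by (simp add: bb_def; arith)
lemma adj3_v1: "ps n x 1 (2*n-x) = 10*n-5*x+6"
  using x1 xn h1 h2 ps_val[of 1 "2*n-x"] by (simp add: bb_def; arith)
lemma adj3_v2: "ps n x 2 (2*n-x) = 2"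
  using x1 xn h1 h2 ps_val[of 2 "2*n-x"] by (simp add: bb_def; arith)
lemma adj3_v3: "ps n x 3 (2*n-x) = 5*n-5*x+3"
  using x1 xn h1 h2 ps_val[of 3 "2*n-x"] by (simp add: bb_def; arith)
lemma adj3_v4: "ps n x 4 (2*n-x) = 10*n-10*x+4"
  using x1 xn h1 h2 ps_val[of 4 "2*n-x"] by (simp add: bb_def; arith)
lemmas adj3_vals = adj3_v0 adj3_v1 adj3_v2 adj3_v3 adj3_v4

lemma adj3_facts: "(0::nat) < 6" "(0::nat) < 5*x+2" "(0::nat) < 5*n+3" "(0::nat) < 10*n-5*x+4" "(0::nat) < 10*n-5*x" "(0::nat) < 10*n-5*x+6" "(0::nat) < 2" "(0::nat) < 5*n-5*x+3" "(0::nat) < 10*n-10*x+4" "\<not> (6::nat) < 0" "(6::nat) < 5*x+2" "(6::nat) < 5*n+3" "(6::nat) < 10*n-5*x+4" "(6::nat) < 10*n-5*x" "(6::nat) < 10*n-5*x+6" "\<not> (6::nat) < 2" "(6::nat) < 5*n-5*x+3" "(6::nat) < 10*n-10*x+4" "\<not> (5*x+2::nat) < 0" "\<not> (5*x+2::nat) < 6" "(5*x+2::nat) < 5*n+3" "(5*x+2::nat) < 10*n-5*x+4" "(5*x+2::nat) < 10*n-5*x" "(5*x+2::nat) < 10*n-5*x+6" "\<not> (5*x+2::nat) < 2" "\<not> (5*x+2::nat) < 5*n-5*x+3" "(5*x+2::nat) < 10*n-10*x+4" "\<not> (5*n+3::nat) < 0" "\<not> (5*n+3::nat) < 6" "\<not>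 (5*n+3::nat) < 5*x+2" "(5*n+3::nat) < 10*n-5*x+4" "(5*n+3::nat) < 10*n-5*x" "(5*n+3::nat) < 10*n-5*x+6" "\<not> (5*n+3::nat) < 2" "\<not> (5*n+3::nat) < 5*n-5*x+3" "\<not> (5*n+3::nat) < 10*n-10*x+4" "\<not> (10*n-5*x+4::nat) < 0" "\<not> (10*n-5*x+4::nat) < 6" "\<not> (10*n-5*x+4::nat) < 5*x+2" "\<not> (10*n-5*x+4::nat) < 5*n+3" "\<not> (10*n-5*x+4::nat) < 10*n-5*x" "(10*n-5*x+4::nat) < 10*n-5*x+6" "\<not> (10*n-5*x+4::nat) < 2" "\<not> (10*n-5*x+4::nat) < 5*n-5*x+3" "\<not> (10*n-5*x+4::nat) < 10*n-10*x+4" "\<not> (10*n-5*x::nat) < 0" "\<not> (10*n-5*x::nat) < 6" "\<not> (10*n-5*x::nat) < 5*x+2" "\<not> (10*n-5*x::nat) < 5*n+3" "(10*n-5*x::nat) < 10*n-5*x+4" "(10*n-5*x::nat) < 10*n-5*x+6" "\<not> (10*n-5*x::nat) < 2" "\<not> (10*n-5*x::nat) < 5*n-5*x+3" "\<not> (10*n-5*x::nat) < 10*n-10*x+4" "\<not> (10*n-5*x+6::nat) < 0" "\<not> (10*n-5*x+6::nat) < 6" "\<not> (10*n-5*x+6::nat) < 5*x+2" "\<not> (10*n-5*x+6::nat) < 5*n+3" "\<not> (10*n-5*x+6::nat) < 10*n-5*x+4" "\<not> (10*n-5*x+6::nat) < 10*n-5*x" "\<not> (10*n-5*x+6::nat)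 < 2" "\<not> (10*n-5*x+6::nat) < 5*n-5*x+3" "\<not> (10*n-5*x+6::nat) < 10*n-10*x+4" "\<not> (2::nat) < 0" "(2::nat) < 6" "(2::nat) < 5*x+2" "(2::nat) < 5*n+3" "(2::nat) < 10*n-5*x+4" "(2::nat) < 10*n-5*x" "(2::nat) < 10*n-5*x+6" "(2::nat) < 5*n-5*x+3" "(2::nat) < 10*n-10*x+4" "\<not> (5*n-5*x+3::nat) < 0" "\<not> (5*n-5*x+3::nat) < 6" "(5*n-5*x+3::nat) < 5*x+2" "(5*n-5*x+3::nat) < 5*n+3" "(5*n-5*x+3::nat) < 10*n-5*x+4" "(5*n-5*x+3::nat) < 10*n-5*x" "(5*n-5*x+3::nat) < 10*n-5*x+6" "\<not> (5*n-5*x+3::nat) < 2" "(5*n-5*x+3::nat) < 10*n-10*x+4" "\<not> (10*n-10*x+4::nat) < 0" "\<not> (10*n-10*x+4::nat) < 6" "\<not> (10*n-10*x+4::nat) < 5*x+2" "(10*n-10*x+4::nat) < 5*n+3" "(10*n-10*x+4::nat) < 10*n-5*x+4" "(10*n-10*x+4::nat) < 10*n-5*x" "(10*n-10*x+4::nat) < 10*n-5*x+6" "\<not> (10*n-10*x+4::nat) < 2" "\<not> (10*n-10*x+4::nat) < 5*n-5*x+3"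
  using x1 xn h1 h2 by arith+

lemma adj3: "(\<forall>j<5. card {k. k < 5 \<and> ps n x k (0) < ps n x j 0} = card {k. k < 5 \<and> ps n x k (2*n-x) < ps n x j 0}) \<and> (\<forall>j<5. card {k. k < 5 \<and> ps n x k (0) < ps n x j (2*n-x)} = card {k. k < 5 \<and> ps n x k (2*n-x) < ps n x j (2*n-x)} + 1)"
  unfolding all5 card5 ps0 adj3_vals by (simp only: adj3_facts if_True if_False) simp

lemma adj4_v0: "ps n x 0 (2*n-1) = 10*n-5"
  using x1 xn h1 h2 ps_val[of 0 "2*n-1"] by (simp add: bb_def; arith)
lemma adj4_v1: "ps n x 1 (2*n-1) = 1"
  using x1 xn h1 h2 ps_val[of 1 "2*n-1"] by (simp add: bb_def; arith)
lemma adj4_v2: "ps n x 2 (2*n-1) = 5*x-3"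
  using x1 xn h1 h2 ps_val[of 2 "2*n-1"] by (simp add: bb_def; arith)
lemma adj4_v3: "ps n x 3 (2*n-1) = 5*n-2"
  using x1 xn h1 h2 ps_val[of 3 "2*n-1"] by (simp add: bb_def; arith)
lemma adj4_v4: "ps n x 4 (2*n-1) = 10*n-5*x-1"
  using x1 xn h1 h2 ps_val[of 4 "2*n-1"] by (simp add: bb_def; arith)
lemmas adj4_vals = adj4_v0 adj4_v1 adj4_v2 adj4_v3 adj4_v4

lemma adj4_facts: "(0::nat) < 6" "(0::nat) < 5*x+2" "(0::nat) < 5*n+3" "(0::nat) < 10*n-5*x+4" "(0::nat) < 10*n-5" "(0::nat) < 1" "(0::nat) < 5*x-3" "(0::nat) < 5*n-2" "(0::nat) < 10*n-5*x-1" "\<not> (6::nat) < 0" "(6::nat) < 5*x+2" "(6::nat) < 5*n+3" "(6::nat) < 10*n-5*x+4" "(6::nat) < 10*n-5" "\<not> (6::nat) < 1" "(6::nat) < 5*x-3" "(6::nat) < 5*n-2" "(6::nat) < 10*n-5*x-1" "\<not> (5*x+2::nat) < 0" "\<not> (5*x+2::nat) < 6" "(5*x+2::nat) < 5*n+3" "(5*x+2::nat) < 10*n-5*x+4" "(5*x+2::nat) < 10*n-5" "\<not> (5*x+2::nat) < 1" "\<not> (5*x+2::nat) < 5*x-3" "(5*x+2::nat) < 5*n-2" "(5*x+2::nat) < 10*n-5*x-1" "\<not> (5*n+3::nat) < 0" "\<not> (5*n+3::nat) < 6" "\<not> (5*n+3::nat) < 5*x+2" "(5*n+3::nat) < 10*n-5*x+4"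 "(5*n+3::nat) < 10*n-5" "\<not> (5*n+3::nat) < 1" "\<not> (5*n+3::nat) < 5*x-3" "\<not> (5*n+3::nat) < 5*n-2" "(5*n+3::nat) < 10*n-5*x-1" "\<not> (10*n-5*x+4::nat) < 0" "\<not> (10*n-5*x+4::nat) < 6" "\<not> (10*n-5*x+4::nat) < 5*x+2" "\<not> (10*n-5*x+4::nat) < 5*n+3" "(10*n-5*x+4::nat) < 10*n-5" "\<not> (10*n-5*x+4::nat) < 1" "\<not> (10*n-5*x+4::nat) < 5*x-3" "\<not> (10*n-5*x+4::nat) < 5*n-2" "\<not> (10*n-5*x+4::nat) < 10*n-5*x-1" "\<not> (10*n-5::nat) < 0" "\<not> (10*n-5::nat) < 6" "\<not> (10*n-5::nat) < 5*x+2" "\<not> (10*n-5::nat) < 5*n+3" "\<not> (10*n-5::nat) < 10*n-5*x+4" "\<not> (10*n-5::nat) < 1" "\<not> (10*n-5::nat) < 5*x-3" "\<not> (10*n-5::nat) < 5*n-2" "\<not> (10*n-5::nat) < 10*n-5*x-1" "\<not> (1::nat) < 0" "(1::nat) < 6" "(1::nat) < 5*x+2" "(1::nat) < 5*n+3" "(1::nat) < 10*n-5*x+4" "(1::nat) < 10*n-5" "(1::nat) < 5*x-3" "(1::nat) < 5*n-2" "(1::nat) < 10*n-5*x-1" "\<not> (5*x-3::nat) < 0" "\<not> (5*x-3::nat) < 6" "(5*x-3::nat) < 5*x+2" "(5*x-3::nat) < 5*n+3" "(5*x-3::nat) < 10*n-5*x+4" "(5*x-3::nat) < 10*n-5" "\<not>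 (5*x-3::nat) < 1" "(5*x-3::nat) < 5*n-2" "(5*x-3::nat) < 10*n-5*x-1" "\<not> (5*n-2::nat) < 0" "\<not> (5*n-2::nat) < 6" "\<not> (5*n-2::nat) < 5*x+2" "(5*n-2::nat) < 5*n+3" "(5*n-2::nat) < 10*n-5*x+4" "(5*n-2::nat) < 10*n-5" "\<not> (5*n-2::nat) < 1" "\<not> (5*n-2::nat) < 5*x-3" "(5*n-2::nat) < 10*n-5*x-1" "\<not> (10*n-5*x-1::nat) < 0" "\<not> (10*n-5*x-1::nat) < 6" "\<not> (10*n-5*x-1::nat) < 5*x+2" "\<not> (10*n-5*x-1::nat) < 5*n+3" "(10*n-5*x-1::nat) < 10*n-5*x+4" "(10*n-5*x-1::nat) < 10*n-5" "\<not> (10*n-5*x-1::nat) < 1" "\<not> (10*n-5*x-1::nat) < 5*x-3" "\<not> (10*n-5*x-1::nat) < 5*n-2"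
  using x1 xn h1 h2 by arith+

lemma adj4: "(\<forall>j<5. card {k. k < 5 \<and> ps n x k (0) < ps n x j 0} = card {k. k < 5 \<and> ps n x k (2*n-1) < ps n x j 0}) \<and> (\<forall>j<5. card {k. k < 5 \<and> ps n x k (0) < ps n x j (2*n-1)} = card {k. k < 5 \<and> ps n x k (2*n-1) < ps n x j (2*n-1)} + 1)"
  unfolding all5 card5 ps0 adj4_vals by (simp only: adj4_facts if_True if_False) simp

lemma nonadj:
  assumes d: "0 < d" "d < 2*n" and nd: "d \<notin> {1, x, n, 2*n-x, 2*n-1}"
  shows "card {k. k < 5 \<and> ps n x k 0 < ps n x 1 0} \<noteq> card {k. k < 5 \<and> ps n x k d < ps n x 1 0}"
proof -
  have "card {k. k < 5 \<and> ps n x k 0 < ps n x 1 0} = 1"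
    unfolding card5 ps0 using x1 xn h1 h2 by simp
  moreover have "card {k. k < 5 \<and> ps n x k d < ps n x 1 0} = 0"
  proof -
    have "\<not> ps n x k d < 6" if k: "k < 5" for k
    proof -
      have "k = 0 \<or> k = 1 \<or> k = 2 \<or> k = 3 \<or> k = 4" using k by arith
      then show ?thesis using ps_val[OF k d(2)] d nd x1 xn by (auto simp: bb_def)
    qed
    then have "{k. k < 5 \<and> ps n x k d < ps n x 1 0} = {}" unfolding ps0 by auto
    then show ?thesis by (metis card.empty)
  qed
  ultimately show ?thesis by linarith
qed

lemma forall_pos:
  assumes v: "v < 2*n"
  shows "(\<forall>i<length (ww n x). ww n x ! i = v \<longrightarrow> Q i) \<longleftrightarrow> (\<forall>j<5. Q (ps n x j v))"
proof
  assume H: "\<forall>i<length (ww n x). ww n x ! i = v \<longrightarrow> Q i"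
  show "\<forall>j<5. Q (ps n x j v)"
  proof (intro allI impI)
    fix j :: nat assume j: "j < 5"
    have l: "ps n x j v < 10*n" using ps_lt'[OF j] .
    have "ww n x ! ps n x j v = v" using ww_eq'[OF l v] j by blast
    then show "Q (ps n x j v)" using H l by simp
  qed
next
  assume H: "\<forall>j<5. Q (ps n x j v)"
  show "\<forall>i<length (ww n x). ww n x ! i = v \<longrightarrow> Q i"
  proof (intro allI impI)
    fix i assume i: "i < length (ww n x)" and e: "ww n x ! i = v"
    then obtain j where "j < 5" "i = ps n x j v" using ww_eq'[of i v] v by auto
    then show "Q i" using H by simp
  qed
qed

lemma alt0d:
  assumes d: "0 < d" "d < 2*n"
  shows "alternate (ww n x) 0 d \<longleftrightarrow>
    (\<forall>j<5. card {k. k < 5 \<and> ps n x k 0 < ps n x j 0} = card {k. k < 5 \<and> ps n x k d < ps n x j 0}) \<and>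
    (\<forall>j<5. card {k. k < 5 \<and> ps n x k 0 < ps n x j d} = card {k. k < 5 \<and> ps n x k d < ps n x j d} + 1)"
  (is "_ \<longleftrightarrow> ?R")
proof -
  let ?w = "ww n x"
  have z: "0 < 2*n" using xn by simp
  have f: "(\<lambda>z. z = d \<or> z = (0::nat)) = (\<lambda>z. z = 0 \<or> z = d)" by auto
  have w0: "?w ! 0 = 0" using xn by (simp add: nth_ww' bb_def)
  have l0: "0 < length ?w" using xn by simp
  have c0: "\<And>v. cnt ?w 0 v = 0" by (simp add: cnt_def)
  have "\<not> (filter (\<lambda>z. z = 0 \<or> z = d) ?w = pat d 0 (length (filter (\<lambda>z. z = 0 \<or> z = d) ?w)))"
  proof
    assume H: "filter (\<lambda>z. z = 0 \<or> z = d) ?w = pat d 0 (length (filter (\<lambda>z. z = 0 \<or> z = d) ?w))"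
    have "\<forall>i<length ?w. ?w!i = 0 \<longrightarrow> cnt ?w i d = cnt ?w i 0 + 1"
      using D_crit[of d 0 ?w] d H unfolding f by blast
    then have "cnt ?w 0 d = cnt ?w 0 0 + 1" using w0 l0 by blast
    then show False using c0 by simp
  qed
  then have "alternate ?w 0 d \<longleftrightarrow> (filter (\<lambda>z. z = 0 \<or> z = d) ?w = pat 0 d (length (filter (\<lambda>z. z = 0 \<or> z = d) ?w)))"
    unfolding alternate_pat Let_def by blast
  also have "\<dots> \<longleftrightarrow> ((\<forall>i<length ?w. ?w!i = 0 \<longrightarrow> cnt ?w i 0 = cnt ?w i d) \<and>
         (\<forall>i<length ?w. ?w!i = d \<longrightarrow> cnt ?w i 0 = cnt ?w i d + 1))"
    using D_crit[of 0 d ?w] d by simp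
  also have "\<dots> \<longleftrightarrow> ?R"
    unfolding forall_pos[OF z] forall_pos[OF d(2)] cnt_ww'[OF z] cnt_ww'[OF d(2)] ..
  finally show ?thesis .
qed

lemma adj_iff:
  assumes d: "0 < d" "d < 2*n"
  shows "alternate (ww n x) 0 d \<longleftrightarrow> d \<in> {1, x, n, 2*n-x, 2*n-1}"
proof
  assume "alternate (ww n x) 0 d"
  then have "card {k. k < 5 \<and> ps n x k 0 < ps n x 1 0} = card {k. k < 5 \<and> ps n x k d < ps n x 1 0}"
    using alt0d[OF d] by (simp add: all5)
  then show "d \<in> {1, x, n, 2*n-x, 2*n-1}" using nonadj[OF d] by blast
next
  assume "d \<in> {1, x, n, 2*n-x, 2*n-1}"
  then show "alternate (ww n x) 0 d"
    using alt0d[OF d] adj0 adj1 adj2 adj3 adj4 by auto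
qed

lemma rot_ww:
  assumes a: "a < 2*n"
  shows "rotate (5*a) (ww n x) = map (\<lambda>z. (z + a) mod (2*n)) (ww n x)"
proof (rule nth_equalityI)
  show "length (rotate (5*a) (ww n x)) = length (map (\<lambda>z. (z + a) mod (2*n)) (ww n x))" by simp
next
  fix i assume "i < length (rotate (5*a) (ww n x))"
  then have i: "i < 10*n" by simp
  define m where "m = (i + 5*a) mod (10*n)"
  have m: "m < 10*n" using i m_def by simp
  have mm: "m = 5 * ((i div 5 + a) mod (2*n)) + i mod 5"
  proof -
    have "m = (i + 5*a) mod (5*(2*n))" by (simp add: m_def)
    also have "\<dots> = 5 * ((i + 5*a) div 5 mod (2*n)) + (i + 5*a) mod 5" by (rule mod_mult2_eq)
    also have "(i + 5*a) div 5 = i div 5 + a" by simp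
    also have "(i + 5*a) mod 5 = i mod 5" by simp
    finally show ?thesis .
  qed
  have "rotate (5*a) (ww n x) ! i = ww n x ! m" using i by (simp add: nth_rotate m_def add.commute)
  also have "\<dots> = (m div 5 + bb n x (m mod 5)) mod (2*n)" using m by (simp add: nth_ww')
  also have "\<dots> = ((i div 5 + a) mod (2*n) + bb n x (i mod 5)) mod (2*n)" using mm by simp
  also have "\<dots> = (i div 5 + a + bb n x (i mod 5)) mod (2*n)"
    by (rule mod_add_left_eq)
  also have "\<dots> = (i div 5 + bb n x (i mod 5) + a) mod (2*n)"
    by (simp only: add_ac)
  also have "\<dots> = ((i div 5 + bb n x (i mod 5)) mod (2*n) + a) mod (2*n)"
    by (simp add: mod_add_left_eq)
  also have "\<dots> = map (\<lambda>z. (z + a) mod (2*n)) (ww n x) ! i" using i by (simp add: nth_ww')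
  finally show "rotate (5*a) (ww n x) ! i = map (\<lambda>z. (z + a) mod (2*n)) (ww n x) ! i" .
qed

lemma alt_ab:
  assumes a: "a < 2*n" and b: "b < 2*n" and ab: "a \<noteq> b"
  shows "alternate (ww n x) a b \<longleftrightarrow> alternate (ww n x) 0 ((b + 2*n - a) mod (2*n))"
proof -
  define d where "d = (b + 2*n - a) mod (2*n)"
  define g where "g = (\<lambda>z. (z + a) mod (2*n))"
  have d: "d < 2*n" using a by (simp add: d_def)
  have gd: "g d = b" unfolding g_def d_def
  proof -
    have "((b + 2*n - a) mod (2*n) + a) mod (2*n) = (b + 2*n - a + a) mod (2*n)" by (simp add: mod_add_left_eq)
    also have "\<dots> = b" using a b by simp
    finally show "((b + 2*n - a) mod (2*n) + a) mod (2*n) = b" .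
  qed
  have g0: "g 0 = a" using a by (simp add: g_def)
  have inj: "inj_on g (set (ww n x))"
  proof (rule inj_onI)
    fix u v assume "u \<in> set (ww n x)" "v \<in> set (ww n x)" "g u = g v"
    then have u: "u < 2*n" and v: "v < 2*n" and e: "(u + a) mod (2*n) = (v + a) mod (2*n)"
      by (auto simp: set_ww' g_def)
    then have "(u + a + (2*n - a)) mod (2*n) = (v + a + (2*n - a)) mod (2*n)"
      by (metis mod_add_left_eq)
    then show "u = v" using u v a by simp
  qed
  have s: "0 \<in> set (ww n x)" "d \<in> set (ww n x)" using d xn by (auto simp: set_ww')
  have "alternate (ww n x) 0 d \<longleftrightarrow> alternate (map g (ww n x)) (g 0) (g d)"
    using alt_map[OF inj s] by simp
  also have "map g (ww n x) = rotate (5*a) (ww n x)" using rot_ww[OF a] by (simp add: g_def)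
  also have "alternate (rotate (5*a) (ww n x)) (g 0) (g d) \<longleftrightarrow> alternate (ww n x) a b"
    unfolding g0 gd using alt_rot[OF ab] count_ww' a b by simp
  finally show ?thesis by (simp add: d_def)
qed

lemma minlem: "0 < e \<Longrightarrow> e < 2*n \<Longrightarrow> 1 < (x::nat) \<Longrightarrow> x < n \<Longrightarrow>
  (min e (2*n-e) \<in> {1, x, n}) = (e \<in> {1, x, n, 2*n-x, 2*n-1}) \<and>
  (min e (2*n-e) \<in> {1, x, n}) = (2*n-e \<in> {1, x, n, 2*n-x, 2*n-1})"
  unfolding min_def insert_iff empty_iff by presburger

lemma represents_ww: "represents (circ_vertices (2*n)) (circ_adj (2*n) {1, x, n}) (ww n x)"
  unfolding represents_def
proof (intro conjI ballI impI)
  show "set (ww n x) = circ_vertices (2*n)" by (simp add: set_ww' circ_vertices_def)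
next
  fix a b assume "a \<in> circ_vertices (2*n)" "b \<in> circ_vertices (2*n)" and ab: "a \<noteq> b"
  then have a: "a < 2*n" and b: "b < 2*n" by (auto simp: circ_vertices_def)
  define d where "d = (b + 2*n - a) mod (2*n)"
  have dv: "d = (if a \<le> b then b - a else b + 2*n - a)"
    unfolding d_def using modsub[of b "2*n" a] a b by simp
  have d: "0 < d" "d < 2*n" using dv a b ab by auto
  have "alternate (ww n x) a b \<longleftrightarrow> d \<in> {1, x, n, 2*n-x, 2*n-1}"
    using alt_ab[OF a b ab] adj_iff[OF d] by (simp add: d_def)
  also have "\<dots> \<longleftrightarrow> circ_adj (2*n) {1, x, n} a b"
  proof -
    define e where "e = (if a \<le> b then b - a else a - b)"
    have e0: "0 < e" "e < 2*n" using a b ab by (auto simp: e_def)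
    have ce: "circ_adj (2*n) {1, x, n} a b \<longleftrightarrow> min e (2*n-e) \<in> {1, x, n}"
      unfolding circ_adj_def Let_def e_def ..
    show ?thesis
    proof (cases "a \<le> b")
      case True
      then have de: "d = e" using dv e_def by simp
      have m: "(min e (2*n-e) \<in> {1, x, n}) = (e \<in> {1, x, n, 2*n-x, 2*n-1})"
        using minlem[OF e0 x1 xn] by blast
      show ?thesis by (simp only: ce m de)
    next
      case False
      then have de: "d = 2*n - e" using dv e_def a by simp
      have m: "(min e (2*n-e) \<in> {1, x, n}) = (2*n-e \<in> {1, x, n, 2*n-x, 2*n-1})"
        using minlem[OF e0 x1 xn] by blast
      show ?thesis by (simp only: ce m de)
    qed
  qed
  finally show "circ_adj (2*n) {1, x, n} a b \<longleftrightarrow> alternate (ww n x) a b" by simp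
qed

lemma uniform_ww: "uniform 5 (ww n x)"
  unfolding uniform_def using count_ww' by (simp add: set_ww')

end

theorem theorem27:
  fixes n x :: nat
  assumes "1 < x" and "x < n"
    and "real n / 2 < real x" and "real x \<le> 2 * real n / 3"
  shows "word_representable (circ_vertices (2*n)) (circ_adj (2*n) {1, x, n})
       \<and> rep_number (circ_vertices (2*n)) (circ_adj (2*n) {1, x, n}) \<le> 5"
proof -
  have "real n < real (2*x)" using assms(3) by simp
  then have n2x: "n < 2*x" by (simp only: of_nat_less_iff)
  have "real (3*x) \<le> real (2*n)" using assms(4) by simp
  then have h2: "3*x \<le> 2*n" by (simp only: of_nat_le_iff)
  have r: "represents (circ_vertices (2*n)) (circ_adj (2*n) {1, x, n}) (ww n x)"
    by (rule represents_ww[OF assms(1) assms(2) n2x h2])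
  have u: "uniform 5 (ww n x)" by (rule uniform_ww[OF assms(1) assms(2) n2x h2])
  have k: "k_representable 5 (circ_vertices (2*n)) (circ_adj (2*n) {1, x, n})"
    unfolding k_representable_def using r u by blast
  have "word_representable (circ_vertices (2*n)) (circ_adj (2*n) {1, x, n})"
    unfolding word_representable_def using r by blast
  moreover have "rep_number (circ_vertices (2*n)) (circ_adj (2*n) {1, x, n}) \<le> 5"
    unfolding rep_number_def by (rule Least_le, rule k)
  ultimately show ?thesis by blast
qed

end
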